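(* Let $\mathcal{R}\subset\mathbb{R}_{>0}^n$ be a compact log-convex set and let $\ell:\mathcal{R}\to\mathbb{R}_{>0}$ be continuous. Then for every $\tilde\varepsilon>0$ there exist a positive integer $p$ and, with $T=1/p$, two functions $\psi_T,\psi'_T\in\mathrm{GPOS}_T$ with rational parameters such that for all $\mathbf{x}\in\mathcal{R}$, $$\left|\frac{\ell(\mathbf{x})-\psi_T(\mathbf{x})/\psi'_T(\mathbf{x})}{\min\big(\ell(\mathbf{x}),\psi_T(\mathbf{x})/\psi'_T(\mathbf{x})\big)}\right|\leqslant\tilde\varepsilon.$$
   Context: A set $\mathcal{R}\subset\mathbb{R}_{>0}^n$ is log-convex if its image under the entrywise logarithm is convex. A posynomial is a function $\psi:\mathbb{R}_{>0}^n\to\mathbb{R}_{>0}$, $\psi(\mathbf{x})=\sum_{k=1}^K c_k\mathbf{x}^{\boldsymbol{\alpha}^{(k)}}$, with $K$ a positive integer, $c_k>0$, $\boldsymbol{\alpha}^{(k)}\in\mathbb{R}^n$, and $\mathbf{x}^{\boldsymbol{\alpha}}=x_1^{\alpha_1}\cdots x_n^{\alpha_n}$. For $T>0$, $\mathrm{GPOS}_T$ is the class of functions $\psi_T(\mathbf{x})=(\psi(\mathbf{x}^{1/T}))^T$ with $\psi$ a posynomial (powers taken entrywise). $\psi_T\in\mathrm{GPOS}_T$ has rational parameters if it can be written so with $T$ rational, all entries of the $\boldsymbol{\alpha}^{(k)}$ rational, and all $\log c_k$ rational. *)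

theory Defs
  imports "HOL-Analysis.Analysis"
begin

definition pos_orthant :: "(real^'n) set" where
  "pos_orthant = {x. \<forall>i. x $ i > 0}"

definition log_convex :: "(real^'n) set \<Rightarrow> bool" where
  "log_convex R \<longleftrightarrow> R \<subseteq> pos_orthant \<and> convex ((\<lambda>x. \<chi> i. ln (x $ i)) ` R)"

text \<open>A posynomial is given by a nonempty list of terms (c_k, alpha^(k)),
  evaluating to sum_k c_k * x^(alpha^(k)).\<close>
definition posy_eval :: "(real \<times> (real^'n)) list \<Rightarrow> real^'n \<Rightarrow> real" where
  "posy_eval ts x = (\<Sum>(c, a)\<leftarrow>ts. c * (\<Prod>i\<in>UNIV. (x $ i) powr (a $ i)))"

definition gpos_eval :: "real \<Rightarrow> (real \<times> (real^'n)) list \<Rightarrow> real^'n \<Rightarrow> real" where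
  "gpos_eval T ts x = (posy_eval ts (\<chi> i. (x $ i) powr (1 / T))) powr T"

definition gpos_rat :: "real \<Rightarrow> (real^'n \<Rightarrow> real) set" where
  "gpos_rat T = {f. T > 0 \<and> T \<in> \<rat> \<and>
     (\<exists>ts. ts \<noteq> [] \<and>
        (\<forall>(c, a) \<in> set ts. c > 0 \<and> ln c \<in> \<rat> \<and> (\<forall>i. a $ i \<in> \<rat>)) \<and>
        (\<forall>x \<in> pos_orthant. f x = gpos_eval T ts x))}"

end

theory Submission
  imports Defs
begin


definition monm :: "real^'n \<Rightarrow> real^'n \<Rightarrow> real" where
  "monm a x = (\<Prod>i\<in>UNIV. (x $ i) powr (a $ i))"

definition coefok :: "(real \<times> (real^'n)) list \<Rightarrow> bool" where
  "coefok ts \<longleftrightarrow> (\<forall>(c, a) \<in> set ts. c > 0 \<and> ln c \<in> \<rat> \<and> (\<forall>i. a $ i \<in> \<rat>))"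

definition good :: "(real \<times> (real^'n)) list \<Rightarrow> bool" where
  "good ts \<longleftrightarrow> ts \<noteq> [] \<and> coefok ts"

lemma posy_Nil[simp]: "posy_eval [] x = 0"
  by (simp add: posy_eval_def)

lemma posy_Cons[simp]: "posy_eval ((c,a)#ts) x = c * monm a x + posy_eval ts x"
  by (simp add: posy_eval_def monm_def)

lemma posy_append[simp]: "posy_eval (ts @ us) x = posy_eval ts x + posy_eval us x"
  by (simp add: posy_eval_def)

lemma monm_add: "monm (a + b) x = monm a x * monm b x"
  by (simp add: monm_def powr_add prod.distrib)

lemma monm_zero: "x \<in> pos_orthant \<Longrightarrow> monm 0 x = 1"
  unfolding monm_def pos_orthant_def by (auto intro!: prod.neutral simp: less_imp_neq[symmetric])

lemma monm_axis: "x \<in> pos_orthant \<Longrightarrow> monm (axis i 1) x = x $ i"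
proof -
  assume x: "x \<in> pos_orthant"
  have "monm (axis i 1) x = (\<Prod>j\<in>UNIV. if j = i then x $ i else 1)"
    unfolding monm_def
    by (rule prod.cong) (use x in \<open>auto simp: axis_def pos_orthant_def less_imp_le less_imp_neq[symmetric]\<close>)
  also have "\<dots> = x $ i" by simp
  finally show ?thesis .
qed

lemma monm_pos: "x \<in> pos_orthant \<Longrightarrow> monm a x > 0"
  unfolding monm_def pos_orthant_def by (auto intro!: prod_pos simp: less_imp_neq[symmetric])

fun pmul :: "(real \<times> (real^'n)) list \<Rightarrow> (real \<times> (real^'n)) list \<Rightarrow> (real \<times> (real^'n)) list" where
  "pmul [] us = []"
| "pmul (t#ts) us = map (\<lambda>(d,b). (fst t * d, snd t + b)) us @ pmul ts us"

lemma posy_map: "posy_eval (map (\<lambda>(d,b). (c * d, a + b)) us) x = c * monm a x * posy_eval us x"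
  by (induction us) (auto simp: monm_add algebra_simps)

lemma posy_pmul[simp]: "posy_eval (pmul ts us) x = posy_eval ts x * posy_eval us x"
  by (induction ts) (auto simp: posy_map algebra_simps)

fun ppow :: "(real \<times> (real^'n)) list \<Rightarrow> nat \<Rightarrow> (real \<times> (real^'n)) list" where
  "ppow ts 0 = [(1,0)]"
| "ppow ts (Suc k) = pmul ts (ppow ts k)"

lemma posy_ppow: "x \<in> pos_orthant \<Longrightarrow> posy_eval (ppow ts k) x = posy_eval ts x ^ k"
  by (induction k) (auto simp: monm_zero)

lemma posy_concat: "posy_eval (concat L) x = (\<Sum>u\<leftarrow>L. posy_eval u x)"
  by (induction L) auto

lemma coefok_append[simp]: "coefok (ts @ us) \<longleftrightarrow> coefok ts \<and> coefok us"
  by (auto simp: coefok_def)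

lemma coefok_pmul: "coefok ts \<Longrightarrow> coefok us \<Longrightarrow> coefok (pmul ts us)"
proof (induction ts)
  case Nil then show ?case by (simp add: coefok_def)
next
  case (Cons t ts)
  obtain c a where t: "t = (c,a)" by force
  have "coefok (map (\<lambda>(d,b). (fst t * d, snd t + b)) us)"
    using Cons.prems t by (auto simp: coefok_def ln_mult)
  then show ?case using Cons by (auto simp: coefok_def)
qed

lemma pmul_nonempty: "ts \<noteq> [] \<Longrightarrow> us \<noteq> [] \<Longrightarrow> pmul ts us \<noteq> []"
  by (cases ts) auto

lemma good_pmul: "good ts \<Longrightarrow> good us \<Longrightarrow> good (pmul ts us)"
  by (simp add: good_def coefok_pmul pmul_nonempty)

lemma good_append: "good ts \<Longrightarrow> good us \<Longrightarrow> good (ts @ us)"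
  by (simp add: good_def)

lemma good_one: "good [(1, 0)]"
  by (simp add: good_def coefok_def)

lemma good_ppow: "good ts \<Longrightarrow> good (ppow ts k)"
  by (induction k) (auto simp: good_one good_pmul)

lemma good_concat: "L \<noteq> [] \<Longrightarrow> (\<forall>u\<in>set L. good u) \<Longrightarrow> good (concat L)"
  by (induction L) (auto simp: good_def coefok_def, blast+)

lemma posy_nonneg: "coefok ts \<Longrightarrow> x \<in> pos_orthant \<Longrightarrow> posy_eval ts x \<ge> 0"
proof (induction ts)
  case (Cons t ts)
  obtain c a where t: "t = (c,a)" by force
  show ?case using Cons t monm_pos[of x a] by (auto simp: coefok_def intro!: add_nonneg_nonneg)
qed simp

lemma posy_pos: "good ts \<Longrightarrow> x \<in> pos_orthant \<Longrightarrow> posy_eval ts x > 0"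
proof (induction ts)
  case (Cons t ts)
  obtain c a where t: "t = (c,a)" by force
  have "posy_eval ts x \<ge> 0" using Cons.prems posy_nonneg[of ts x] by (auto simp: good_def coefok_def)
  then show ?case using Cons t monm_pos[of x a] by (auto simp: good_def coefok_def intro: add_pos_nonneg)
qed (simp add: good_def)

lemma posy_cont: "S \<subseteq> pos_orthant \<Longrightarrow> continuous_on S (posy_eval ts)"
proof (induction ts)
  case Nil then show ?case by (simp add: continuous_on_const)
next
  case (Cons t ts)
  obtain c a where t: "t = (c,a)" by force
  have "continuous_on S (\<lambda>x. monm a x)"
    unfolding monm_def using Cons.prems
    by (intro continuous_intros) (auto simp: pos_orthant_def less_imp_neq[symmetric])
  then show ?case using Cons t by (auto intro!: continuous_intros)
qed

lemma gpos_one: "good (ts :: (real \<times> (real^'n)) list) \<Longrightarrow> (\<lambda>x. posy_eval ts x) \<in> gpos_rat 1"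
proof -
  assume g: "good ts"
  have "\<forall>x\<in>pos_orthant. posy_eval ts x = gpos_eval 1 ts x"
  proof
    fix x :: "real^'n" assume x: "x \<in> pos_orthant"
    have "(\<chi> i. (x $ i) powr (1 / 1)) = x"
      using x by (simp add: vec_eq_iff pos_orthant_def less_imp_le)
    then show "posy_eval ts x = gpos_eval 1 ts x"
      using posy_pos[OF g x] by (simp add: gpos_eval_def)
  qed
  then show ?thesis using g unfolding gpos_rat_def good_def coefok_def by (simp, blast)
qed



definition approx :: "(real^'n) set \<Rightarrow> (real^'n \<Rightarrow> real) \<Rightarrow> bool" where
  "approx K h \<longleftrightarrow> (\<forall>e>0. \<exists>ts us. good ts \<and> good us \<and>
      (\<forall>x\<in>K. \<bar>h x - (posy_eval ts x - posy_eval us x)\<bar> < e))"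

lemma exp_rat_between:
  fixes a b :: real
  assumes "0 < a" "a < b"
  shows "\<exists>q\<in>\<rat>. a < exp q \<and> exp q < b"
proof -
  have "ln a < ln b" using assms by simp
  then obtain q where "q \<in> \<rat>" "ln a < q" "q < ln b" using Rats_dense_in_real by blast
  then show ?thesis using assms
    by (metis exp_less_cancel_iff exp_ln order.strict_trans)
qed

lemma good_const: "q \<in> \<rat> \<Longrightarrow> good [(exp q, 0)]"
  by (simp add: good_def coefok_def)

lemma approx_const:
  assumes K: "K \<subseteq> pos_orthant"
  shows "approx K (\<lambda>_. c)"
  unfolding approx_def
proof (intro allI impI)
  fix e :: real assume e: "e > 0"
  define B where "B = \<bar>c\<bar> + 1"
  have B: "B > 0" "B + c > 0" unfolding B_def by auto
  obtain q1 where q1: "q1 \<in> \<rat>" "B + c < exp q1" "exp q1 < B + c + e/2"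
    using exp_rat_between[of "B + c" "B + c + e/2"] B e by auto
  obtain q2 where q2: "q2 \<in> \<rat>" "B < exp q2" "exp q2 < B + e/2"
    using exp_rat_between[of "B" "B + e/2"] B e by auto
  have "\<forall>x\<in>K. \<bar>c - (posy_eval [(exp q1, 0)] x - posy_eval [(exp q2, 0)] x)\<bar> < e"
    using K q1 q2 by (auto simp: monm_zero)
  then show "\<exists>ts us. good ts \<and> good us \<and> (\<forall>x\<in>K. \<bar>c - (posy_eval ts x - posy_eval us x)\<bar> < e)"
    using good_const q1 q2 by blast
qed

lemma half_sum_abs:
  fixes a b e :: real
  assumes "\<bar>a\<bar> < e/2" "\<bar>b\<bar> < e/2"
  shows "\<bar>a + b\<bar> < e"
proof -
  have "\<bar>a + b\<bar> \<le> \<bar>a\<bar> + \<bar>b\<bar>" by (rule abs_triangle_ineq)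
  then show ?thesis using assms by linarith
qed

lemma approx_add:
  assumes "approx K f" "approx K g"
  shows "approx K (\<lambda>x. f x + g x)"
  unfolding approx_def
proof (intro allI impI)
  fix e :: real assume e: "e > 0"
  obtain ts1 us1 where 1: "good ts1" "good us1" "\<forall>x\<in>K. \<bar>f x - (posy_eval ts1 x - posy_eval us1 x)\<bar> < e/2"
    using assms(1) e unfolding approx_def by (meson half_gt_zero)
  obtain ts2 us2 where 2: "good ts2" "good us2" "\<forall>x\<in>K. \<bar>g x - (posy_eval ts2 x - posy_eval us2 x)\<bar> < e/2"
    using assms(2) e unfolding approx_def by (meson half_gt_zero)
  have "\<forall>x\<in>K. \<bar>f x + g x - (posy_eval (ts1 @ ts2) x - posy_eval (us1 @ us2) x)\<bar> < e"
  proof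
    fix x assume x: "x \<in> K"
    show "\<bar>f x + g x - (posy_eval (ts1 @ ts2) x - posy_eval (us1 @ us2) x)\<bar> < e"
    proof -
      have "f x + g x - (posy_eval (ts1 @ ts2) x - posy_eval (us1 @ us2) x) =
        (f x - (posy_eval ts1 x - posy_eval us1 x)) + (g x - (posy_eval ts2 x - posy_eval us2 x))"
        by (simp only: posy_append)
      then show ?thesis using half_sum_abs[OF bspec[OF 1(3) x] bspec[OF 2(3) x]] by simp
    qed
  qed
  then show "\<exists>ts us. good ts \<and> good us \<and> (\<forall>x\<in>K. \<bar>f x + g x - (posy_eval ts x - posy_eval us x)\<bar> < e)"
    using 1 2 good_append[of ts1 ts2] good_append[of us1 us2] by blast
qed



lemma cont_bound:
  fixes h :: "'a::topological_space \<Rightarrow> real"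
  assumes "compact K" "continuous_on K h"
  shows "\<exists>M>0. \<forall>x\<in>K. \<bar>h x\<bar> \<le> M"
proof -
  have "bounded (h ` K)" using assms compact_continuous_image compact_imp_bounded by blast
  then show ?thesis unfolding bounded_pos by auto
qed

lemma prod_err:
  fixes a b c d M \<delta> :: real
  assumes "\<bar>a\<bar> \<le> M" "\<bar>b\<bar> \<le> M" "\<bar>a - c\<bar> < \<delta>" "\<bar>b - d\<bar> < \<delta>" "\<delta> \<le> 1" "M > 0"
  shows "\<bar>a * b - c * d\<bar> < (2 * M + 1) * \<delta>"
proof -
  have "a * b - c * d = a * (b - d) + d * (a - c)" by (simp add: algebra_simps)
  have d: "\<bar>d\<bar> \<le> M + 1" using assms by linarith
  have "\<bar>a * (b - d)\<bar> \<le> M * \<delta>"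
    using assms by (simp add: abs_mult mult_mono')
  moreover have "\<bar>d * (a - c)\<bar> < (M + 1) * \<delta>"
  proof -
    have "\<delta> > 0" using assms(3) by linarith
    have "\<bar>d * (a - c)\<bar> = \<bar>d\<bar> * \<bar>a - c\<bar>" by (simp add: abs_mult)
    also have "\<dots> \<le> (M + 1) * \<bar>a - c\<bar>" using d by (simp add: mult_right_mono)
    also have "\<dots> < (M + 1) * \<delta>" using assms(3,6) by simp
    finally show ?thesis .
  qed
  moreover have "\<bar>a * (b - d) + d * (a - c)\<bar> \<le> \<bar>a * (b - d)\<bar> + \<bar>d * (a - c)\<bar>"
    by (rule abs_triangle_ineq)
  ultimately have "\<bar>a * (b - d) + d * (a - c)\<bar> < (2 * M + 1) * \<delta>"
    by (simp add: algebra_simps)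
  then show ?thesis by (simp add: algebra_simps)
qed

lemma approx_mult:
  assumes K: "compact K" and cf: "continuous_on K f" and cg: "continuous_on K g"
    and af: "approx K f" and ag: "approx K g"
  shows "approx K (\<lambda>x. f x * g x)"
  unfolding approx_def
proof (intro allI impI)
  fix e :: real assume e: "e > 0"
  obtain M1 where M1: "M1 > 0" "\<forall>x\<in>K. \<bar>f x\<bar> \<le> M1" using cont_bound[OF K cf] by blast
  obtain M2 where M2: "M2 > 0" "\<forall>x\<in>K. \<bar>g x\<bar> \<le> M2" using cont_bound[OF K cg] by blast
  define M where "M = max M1 M2"
  have M: "M > 0" "\<forall>x\<in>K. \<bar>f x\<bar> \<le> M" "\<forall>x\<in>K. \<bar>g x\<bar> \<le> M"
    using M1 M2 unfolding M_def by force+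
  define \<delta> where "\<delta> = min 1 (e / (2 * M + 1))"
  have \<delta>: "\<delta> > 0" "\<delta> \<le> 1" using e M unfolding \<delta>_def by auto
  have "(2 * M + 1) * \<delta> \<le> (2 * M + 1) * (e / (2 * M + 1))"
    using M unfolding \<delta>_def by (intro mult_left_mono) auto
  also have "\<dots> = e" using M by simp
  finally have \<delta>3: "(2 * M + 1) * \<delta> \<le> e" .
  obtain ts1 us1 where 1: "good ts1" "good us1" "\<forall>x\<in>K. \<bar>f x - (posy_eval ts1 x - posy_eval us1 x)\<bar> < \<delta>"
    using af \<delta> unfolding approx_def by meson
  obtain ts2 us2 where 2: "good ts2" "good us2" "\<forall>x\<in>K. \<bar>g x - (posy_eval ts2 x - posy_eval us2 x)\<bar> < \<delta>"
    using ag \<delta> unfolding approx_def by meson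
  define TS where "TS = pmul ts1 ts2 @ pmul us1 us2"
  define US where "US = pmul ts1 us2 @ pmul us1 ts2"
  have "\<forall>x\<in>K. \<bar>f x * g x - (posy_eval TS x - posy_eval US x)\<bar> < e"
  proof
    fix x assume x: "x \<in> K"
    have eq: "posy_eval TS x - posy_eval US x =
       (posy_eval ts1 x - posy_eval us1 x) * (posy_eval ts2 x - posy_eval us2 x)"
      unfolding TS_def US_def by (simp add: algebra_simps)
    have "\<bar>f x * g x - (posy_eval ts1 x - posy_eval us1 x) * (posy_eval ts2 x - posy_eval us2 x)\<bar>
          < (2 * M + 1) * \<delta>"
      by (rule prod_err) (use x M 1 2 \<delta> in auto)
    then show "\<bar>f x * g x - (posy_eval TS x - posy_eval US x)\<bar> < e" using eq \<delta>3 by linarith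
  qed
  moreover have "good TS" "good US" unfolding TS_def US_def using 1 2 by (auto intro!: good_append good_pmul)
  ultimately show "\<exists>ts us. good ts \<and> good us \<and> (\<forall>x\<in>K. \<bar>f x * g x - (posy_eval ts x - posy_eval us x)\<bar> < e)"
    by blast
qed

lemma approx_coord:
  assumes K: "K \<subseteq> pos_orthant"
  shows "approx K (\<lambda>x. x $ i)"
  unfolding approx_def
proof (intro allI impI)
  fix e :: real assume e: "e > 0"
  have g1: "good [(1, axis i 1), (1, 0)]" by (simp add: good_def coefok_def axis_def)
  have "\<forall>x\<in>K. \<bar>x $ i - (posy_eval [(1, axis i 1), (1, 0)] x - posy_eval [(1, 0)] x)\<bar> < e"
    using K e by (auto simp: monm_zero monm_axis)
  then show "\<exists>ts us. good ts \<and> good us \<and> (\<forall>x\<in>K. \<bar>x $ i - (posy_eval ts x - posy_eval us x)\<bar> < e)"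
    using g1 good_one by blast
qed

lemma approx_all:
  assumes K: "compact K" "K \<subseteq> pos_orthant" and l: "continuous_on K l"
  shows "approx K l"
  unfolding approx_def
proof (intro allI impI)
  fix e :: real assume e: "e > 0"
  let ?P = "\<lambda>h. continuous_on K h \<and> approx K h"
  have "\<exists>g. ?P g \<and> (\<forall>x\<in>K. \<bar>l x - g x\<bar> < e/2)"
  proof (rule Stone_Weierstrass_HOL[where P = ?P])
    show "compact K" by fact
    show "\<And>c. ?P (\<lambda>x. c)" using approx_const[OF K(2)] continuous_on_const by blast
    show "\<And>f. ?P f \<Longrightarrow> continuous_on K f" by blast
    show "\<And>f g. ?P f \<and> ?P g \<Longrightarrow> ?P (\<lambda>x. f x + g x)"
      using approx_add by (auto intro!: continuous_intros)
    show "\<And>f g. ?P f \<and> ?P g \<Longrightarrow> ?P (\<lambda>x. f x * g x)"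
      using approx_mult[OF K(1)] by (auto intro!: continuous_intros)
    show "\<And>x y. x \<in> K \<and> y \<in> K \<and> x \<noteq> y \<Longrightarrow> \<exists>f. ?P f \<and> f x \<noteq> f y"
    proof -
      fix x y assume "x \<in> K \<and> y \<in> K \<and> x \<noteq> y"
      then obtain i where "x $ i \<noteq> y $ i" by (auto simp: vec_eq_iff)
      moreover have "?P (\<lambda>x. x $ i)"
        using approx_coord[OF K(2)] by (auto intro!: continuous_intros)
      ultimately show "\<exists>f. ?P f \<and> f x \<noteq> f y" by blast
    qed
  qed (use l e in auto)
  then obtain g where g: "approx K g" "\<forall>x\<in>K. \<bar>l x - g x\<bar> < e/2" by blast
  obtain ts us where tu: "good ts" "good us" "\<forall>x\<in>K. \<bar>g x - (posy_eval ts x - posy_eval us x)\<bar> < e/2"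
    using g(1) e unfolding approx_def by (meson half_gt_zero)
  have "\<forall>x\<in>K. \<bar>l x - (posy_eval ts x - posy_eval us x)\<bar> < e"
  proof
    fix x assume x: "x \<in> K"
    show "\<bar>l x - (posy_eval ts x - posy_eval us x)\<bar> < e"
      using half_sum_abs[OF bspec[OF g(2) x] bspec[OF tu(3) x]] by (simp add: algebra_simps)
  qed
  then show "\<exists>ts us. good ts \<and> good us \<and> (\<forall>x\<in>K. \<bar>l x - (posy_eval ts x - posy_eval us x)\<bar> < e)"
    using tu by blast
qed



lemma core:
  fixes F Gx L S m e G \<theta> :: real and k :: nat
  assumes F: "F > 0" and Gx: "Gx > 0" and S: "S > 0"
    and geo: "F ^ k - Gx ^ k = (F - Gx) * S"
    and m: "m > 0" "L \<ge> m" and app: "\<bar>L - (F - Gx)\<bar> < m * e / 4"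
    and e: "0 < e" "e \<le> 1" and G: "Gx \<le> G" "G > 0"
    and th: "\<theta> = G / (m / 2 + G)" "\<theta> ^ k < e / 4"
  shows "L \<le> (1 + e) * (F ^ k / S) \<and> F ^ k / S \<le> (1 + e) * L"
proof -
  define d where "d = F - Gx"
  define r where "r = F ^ k / S"
  have me: "m * e / 4 \<le> L * e / 4" using m e by (simp add: mult_right_mono)
  have a1: "L - d < m * e / 4" using abs_less_iff[THEN iffD1, OF app, THEN conjunct1] unfolding d_def by linarith
  have a2: "d - L < m * e / 4" using abs_less_iff[THEN iffD1, OF app, THEN conjunct2] unfolding d_def by linarith
  have dlo: "d \<ge> L * (1 - e / 4)" using a1 me by (simp add: algebra_simps)
  have dhi: "d \<le> L * (1 + e / 4)" using a2 me by (simp add: algebra_simps)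
  have "m * e / 4 \<le> m / 4" using m e by (simp add: mult_left_le)
  then have dm: "d \<ge> m / 2" using a1 m by linarith
  have d0: "d > 0" using dm m by linarith
  define q where "q = Gx / F"
  have q0: "q > 0" using F Gx unfolding q_def by simp
  have "Gx * (m / 2 + G) \<le> G * (d + Gx)"
  proof -
    have "Gx * (m / 2) \<le> G * d" using G dm Gx m by (intro mult_mono) auto
    then show ?thesis by (simp add: algebra_simps)
  qed
  then have "Gx / (d + Gx) \<le> G / (m / 2 + G)"
    using d0 Gx G m by (simp add: divide_simps)
  then have qth: "q \<le> \<theta>" unfolding q_def d_def th(1) by simp
  have qk: "q ^ k < e / 4" using qth q0 th(2) power_mono[of q \<theta> k] by linarith
  have Fk: "F ^ k > 0" using F by simp
  have GxFk: "Gx ^ k = q ^ k * F ^ k" unfolding q_def using F by (simp add: power_divide)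
  have dS: "d * S = F ^ k * (1 - q ^ k)" using geo GxFk unfolding d_def by (simp add: algebra_simps)
  have r_eq: "r * (1 - q ^ k) = d"
  proof -
    have "r * (1 - q ^ k) = F ^ k * (1 - q ^ k) / S" unfolding r_def by simp
    also have "\<dots> = d" using dS S by (simp add: field_simps)
    finally show ?thesis .
  qed
  have qk1: "1 - q ^ k > 0" using qk e by linarith
  have qk2: "1 - q ^ k \<le> 1" using q0 by simp
  have r0: "r > 0" unfolding r_def using Fk S by simp
  have rd: "r \<ge> d"
  proof -
    have "r * (1 - q ^ k) \<le> r * 1" using r0 qk2 by (intro mult_left_mono) auto
    then show ?thesis using r_eq by simp
  qed
  have rd2: "r * (1 - e / 4) \<le> d"
  proof -
    have "r * (1 - e / 4) \<le> r * (1 - q ^ k)" using r0 qk by (intro mult_left_mono) auto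
    then show ?thesis using r_eq by simp
  qed
  have L0: "L > 0" using m by linarith
  have A: "L \<le> (1 + e) * r"
  proof -
    have "L \<le> L * ((1 + e) * (1 - e / 4))"
    proof -
      have "(1 + e) * (1 - e / 4) \<ge> 1" using e by (simp add: algebra_simps)
      then show ?thesis using L0 by (simp add: mult_le_cancel_left1)
    qed
    also have "\<dots> = (1 + e) * (L * (1 - e / 4))" by simp
    also have "\<dots> \<le> (1 + e) * r" using dlo rd e by (intro mult_left_mono) auto
    finally show ?thesis .
  qed
  have B: "r \<le> (1 + e) * L"
  proof -
    have "r * (1 - e / 4) \<le> L * (1 + e / 4)" using rd2 dhi by linarith
    also have "\<dots> \<le> (1 + e) * L * (1 - e / 4)"
    proof -
      have ee: "e * e \<le> e" using e by (simp add: mult_left_le)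
      have "(1 + e) * (1 - e / 4) = 1 + 3 * e / 4 - e * e / 4" by (simp add: field_simps)
      then have "1 + e / 4 \<le> (1 + e) * (1 - e / 4)" using ee e by linarith
      then have "L * (1 + e / 4) \<le> L * ((1 + e) * (1 - e / 4))" using L0 by (intro mult_left_mono) auto
      then show ?thesis by (simp add: algebra_simps)
    qed
    finally have "r * (1 - e / 4) \<le> ((1 + e) * L) * (1 - e / 4)" .
    then show ?thesis by (rule mult_right_le_imp_le) (use e in simp)
  qed
  show ?thesis using A B unfolding r_def by simp
qed

lemma rel_err:
  fixes L r e \<epsilon> :: real
  assumes "L > 0" "r > 0" "L \<le> (1 + e) * r" "r \<le> (1 + e) * L" "e \<le> \<epsilon>"
  shows "\<bar>(L - r) / min L r\<bar> \<le> \<epsilon>"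
proof (cases "L \<le> r")
  case True
  then have "\<bar>(L - r) / min L r\<bar> = (r - L) / L" using assms by (simp add: min_def)
  also have "\<dots> \<le> e" using assms by (simp add: divide_simps algebra_simps)
  finally show ?thesis using assms by simp
next
  case False
  then have "\<bar>(L - r) / min L r\<bar> = (L - r) / r" using assms by (simp add: min_def)
  also have "\<dots> \<le> e" using assms by (simp add: divide_simps algebra_simps)
  finally show ?thesis using assms by simp
qed



theorem theorem3:
  fixes R :: "(real^'n) set" and l :: "real^'n \<Rightarrow> real" and \<epsilon> :: real
  assumes "R \<subseteq> pos_orthant"
    and "compact R"
    and "log_convex R"
    and "continuous_on R l"
    and "\<forall>x\<in>R. l x > 0"
    and "\<epsilon> > 0"
  shows "\<exists>p::nat. p > 0 \<and>
           (\<exists>\<psi> \<psi>'. \<psi> \<in> gpos_rat (1 / real p) \<and> \<psi>' \<in> gpos_rat (1 / real p) \<and>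
              (\<forall>x\<in>R. \<bar>(l x - \<psi> x / \<psi>' x) / min (l x) (\<psi> x / \<psi>' x)\<bar> \<le> \<epsilon>))"
proof -
  note K = assms(1) and cK = assms(2) and cl = assms(4) and lpos = assms(5) and ep = assms(6)
  have "continuous_on R (\<lambda>x. 1 / l x)"
    using cl lpos by (intro continuous_intros) auto
  then obtain B where B: "B > 0" "\<forall>x\<in>R. \<bar>1 / l x\<bar> \<le> B" using cont_bound[OF cK] by blast
  define m where "m = 1 / B"
  have m: "m > 0" using B unfolding m_def by simp
  have lm: "\<forall>x\<in>R. l x \<ge> m"
  proof
    fix x assume x: "x \<in> R"
    have "\<bar>1 / l x\<bar> \<le> B" using B(2) x by blast
    then have "1 / l x \<le> B" using abs_ge_self order_trans by blast
    then show "l x \<ge> m" using lpos x B unfolding m_def by (simp add: divide_simps mult.commute)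
  qed
  define e where "e = min \<epsilon> 1"
  have e: "0 < e" "e \<le> 1" "e \<le> \<epsilon>" using ep unfolding e_def by auto
  have "m * e / 4 > 0" using m e by simp
  then obtain ts us where tu: "good ts" "good us"
     "\<forall>x\<in>R. \<bar>l x - (posy_eval ts x - posy_eval us x)\<bar> < m * e / 4"
    using approx_all[OF cK K cl] unfolding approx_def by blast
  obtain G where G: "G > 0" "\<forall>x\<in>R. \<bar>posy_eval us x\<bar> \<le> G"
    using cont_bound[OF cK posy_cont[OF K]] by blast
  define \<theta> where "\<theta> = G / (m / 2 + G)"
  have th: "0 < \<theta>" "\<theta> < 1" using G m unfolding \<theta>_def by (auto simp: divide_simps)
  obtain n where n: "\<theta> ^ n < e / 4" using real_arch_pow_inv[of "e/4" \<theta>] e th by auto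
  define N where "N = Suc n"
  have thN: "\<theta> ^ N < e / 4"
  proof -
    have "\<theta> ^ N \<le> \<theta> ^ n" unfolding N_def using th by (simp add: less_imp_le mult_left_le_one_le)
    then show ?thesis using n by linarith
  qed
  define PS where "PS = ppow ts N"
  define QS where "QS = concat (map (\<lambda>i. pmul (ppow us (n - i)) (ppow ts i)) [0..<N])"
  have gPS: "good PS" unfolding PS_def using tu by (simp add: good_ppow)
  have gQS: "good QS" unfolding QS_def
    by (rule good_concat) (use tu in \<open>auto simp: N_def good_pmul good_ppow\<close>)
  have main: "\<forall>x\<in>R. \<bar>(l x - posy_eval PS x / posy_eval QS x) / min (l x) (posy_eval PS x / posy_eval QS x)\<bar> \<le> \<epsilon>"
  proof
    fix x assume xR: "x \<in> R"
    have x: "x \<in> pos_orthant" using xR K by auto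
    define F where "F = posy_eval ts x"
    define Gx where "Gx = posy_eval us x"
    define S where "S = posy_eval QS x"
    have F: "F > 0" unfolding F_def using posy_pos[OF tu(1) x] .
    have Gx: "Gx > 0" unfolding Gx_def using posy_pos[OF tu(2) x] .
    have S: "S > 0" unfolding S_def using posy_pos[OF gQS x] .
    have PSx: "posy_eval PS x = F ^ N" unfolding PS_def F_def using posy_ppow[OF x] .
    have "S = (\<Sum>i\<leftarrow>[0..<N]. Gx ^ (n - i) * F ^ i)"
      unfolding S_def QS_def F_def Gx_def posy_concat
      by (simp add: posy_ppow[OF x] comp_def)
    also have "\<dots> = (\<Sum>i<N. Gx ^ (N - Suc i) * F ^ i)"
      unfolding N_def by (simp add: interv_sum_list_conv_sum_set_nat atLeast0LessThan)
    finally have Seq: "S = (\<Sum>i<N. Gx ^ (N - Suc i) * F ^ i)" .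
    have geo: "F ^ N - Gx ^ N = (F - Gx) * S"
      unfolding Seq by (rule power_diff_sumr2)
    have Gle: "Gx \<le> G" using G xR unfolding Gx_def by force
    have app: "\<bar>l x - (F - Gx)\<bar> < m * e / 4" using tu(3) xR unfolding F_def Gx_def by blast
    have c: "l x \<le> (1 + e) * (F ^ N / S) \<and> F ^ N / S \<le> (1 + e) * l x"
      by (rule core[OF F Gx S geo m(1) _ app e(1,2) Gle G(1) \<theta>_def thN]) (use lm xR in auto)
    have r0: "F ^ N / S > 0" using F S by simp
    show "\<bar>(l x - posy_eval PS x / posy_eval QS x) / min (l x) (posy_eval PS x / posy_eval QS x)\<bar> \<le> \<epsilon>"
      unfolding PSx S_def[symmetric]
      by (rule rel_err[OF _ r0 c[THEN conjunct1] c[THEN conjunct2] e(3)]) (use lpos xR in auto)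
  qed
  show ?thesis
    by (rule exI[of _ 1], intro conjI exI[of _ "posy_eval PS"] exI[of _ "posy_eval QS"])
       (use gpos_one[OF gPS] gpos_one[OF gQS] main in auto)
qed


end
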